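(* Let $g:\mathbb{C}\to\mathbb{C}$ be holomorphic at $0$ with $g(0)=0$ and $g'(0)\neq 0$, let $\varphi:\mathbb{N}\to\mathbb{C}\setminus\{0\}$, and let $a$ be a real number. Let $(P_n(x))_{n\ge 0}$ be a sequence of Appell polynomials of type $(g,\varphi)$ with generating function $f$, i.e. $f$ is holomorphic at $0$, $f(0)\neq 0$, and $$\sum_{n\ge 0}P_n(x)\frac{t^n}{\varphi(0)\varphi(1)\cdots\varphi(n)}=f(t)e^{x g(t)}$$ for all $x\in\mathbb{C}$ and all $t$ near $0$. Put $h(t)=f(t)e^{\frac{a}{2}g(t)}$. Then $P_n(a-x)=(-1)^nP_n(x)$ for all $n\ge 0$ and all $x$ if and only if $g$ is an odd function and $h$ is an even function (near $0$).
   Context: Here $\mathbb{N}=\{0,1,2,\dots\}$. A sequence of polynomials $(P_n)_n$ is called a sequence of Appell polynomials of type $(g,\varphi)$ if there exists a function $f$ holomorphic at $0$ with $f(0)\neq0$ (its generating function) such that the displayed generating-function identity holds. *)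

theory Defs
  imports "HOL-Analysis.Analysis" "HOL-Computational_Algebra.Polynomial"
begin

definition appell_type ::
  "(complex \<Rightarrow> complex) \<Rightarrow> (nat \<Rightarrow> complex) \<Rightarrow> (nat \<Rightarrow> complex poly)
     \<Rightarrow> (complex \<Rightarrow> complex) \<Rightarrow> bool" where
  "appell_type g \<phi> P f \<longleftrightarrow>
     f analytic_on {0} \<and> f 0 \<noteq> 0 \<and>
     (\<forall>x. \<forall>\<^sub>F t in nhds 0.
        (\<lambda>n. poly (P n) x * t ^ n / (\<Prod>k\<le>n. \<phi> k)) sums (f t * exp (x * g t)))"

end

theory Submission
  imports Defs
begin

lemma ev_neg:
  assumes "\<forall>\<^sub>F t in nhds (0::complex). Q t"
  shows "\<forall>\<^sub>F t in nhds 0. Q (- t)"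
proof -
  from assms obtain d where "d > 0" "\<And>t. dist t 0 < d \<Longrightarrow> Q t"
    unfolding eventually_nhds_metric by blast
  then show ?thesis unfolding eventually_nhds_metric
    by (intro exI[of _ d]) (auto simp: dist_norm)
qed

lemma powser_zero_unique:
  fixes c :: "nat \<Rightarrow> complex"
  assumes "\<forall>\<^sub>F t in nhds 0. (\<lambda>n. c n * t ^ n) sums 0"
  shows "c m = 0"
proof -
  from assms obtain s where s: "s > 0" and sm: "\<And>t. dist t 0 < s \<Longrightarrow> (\<lambda>n. c n * t ^ n) sums 0"
    unfolding eventually_nhds_metric by blast
  show ?thesis
  proof (induction m rule: less_induct)
    case (less m)
    have "(\<lambda>n. c (n + m) * t ^ n) sums 0" if "t \<noteq> 0" "norm t < s" for t
    proof -
      have "(\<lambda>n. c n * t ^ n) sums 0" using sm[of t] that by (simp add: dist_norm)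
      then have "(\<lambda>n. c (n + m) * t ^ (n + m)) sums (0 - (\<Sum>i<m. c i * t ^ i))"
        by (rule sums_split_initial_segment)
      also have "(\<Sum>i<m. c i * t ^ i) = 0" using less by simp
      finally have "(\<lambda>n. t ^ m * (c (n + m) * t ^ n)) sums 0"
        by (simp add: power_add mult_ac)
      from sums_mult_D[OF this] that show ?thesis by simp
    qed
    from powser_limit_0_strong[OF s this]
    have "((\<lambda>_. 0) \<longlongrightarrow> c (0 + m)) (at (0::complex))" by simp
    then show ?case using LIM_const_eq by fastforce
  qed
qed

theorem mainTheorem1:
  fixes g f :: "complex \<Rightarrow> complex" and \<phi> :: "nat \<Rightarrow> complex"
    and P :: "nat \<Rightarrow> complex poly" and a :: real
  assumes "g analytic_on {0}" and "g 0 = 0" and "deriv g 0 \<noteq> 0"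
    and "\<And>n. \<phi> n \<noteq> 0"
    and "appell_type g \<phi> P f"
  shows "(\<forall>n x. poly (P n) (complex_of_real a - x) = (-1) ^ n * poly (P n) x) \<longleftrightarrow>
         ((\<forall>\<^sub>F t in nhds 0. g (- t) = - g t) \<and>
          (\<forall>\<^sub>F t in nhds 0. f (- t) * exp (complex_of_real a / 2 * g (- t))
                              = f t * exp (complex_of_real a / 2 * g t)))"
proof -
  define A where "A = complex_of_real a"
  define C where "C = (\<lambda>n. \<Prod>k\<le>n. \<phi> k)"
  have fa: "f analytic_on {0}" and f0: "f 0 \<noteq> 0" and
    ser: "\<And>x. \<forall>\<^sub>F t in nhds 0. (\<lambda>n. poly (P n) x * t ^ n / C n) sums (f t * exp (x * g t))"
    using assms(5) unfolding appell_type_def C_def by auto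
  have Cnz: "C n \<noteq> 0" for n using assms(4) unfolding C_def by simp
  have sern: "\<forall>\<^sub>F t in nhds 0. (\<lambda>n. poly (P n) x * (- t) ^ n / C n) sums (f (- t) * exp (x * g (- t)))" for x
    using ev_neg[OF ser[of x]] by simp
  show ?thesis unfolding A_def[symmetric]
  proof
    assume H: "\<forall>n x. poly (P n) (A - x) = (-1) ^ n * poly (P n) x"
    have E: "\<forall>\<^sub>F t in nhds 0. f t * exp ((A - x) * g t) = f (- t) * exp (x * g (- t))" for x
      using ser[of "A - x"] sern[of x]
    proof eventually_elim
      case (elim t)
      have "(\<lambda>n. poly (P n) (A - x) * t ^ n / C n) = (\<lambda>n. poly (P n) x * (- t) ^ n / C n)"
      proof (rule ext)
        fix n
        have "poly (P n) (A - x) = (-1) ^ n * poly (P n) x" using H by blast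
        moreover have "(- t) ^ n = (-1) ^ n * t ^ n" by (rule power_minus)
        ultimately show "poly (P n) (A - x) * t ^ n / C n = poly (P n) x * (- t) ^ n / C n"
          by (simp only: mult_ac)
      qed
      with elim show ?case using sums_unique2 by metis
    qed
    have fne: "\<forall>\<^sub>F t in nhds 0. f t \<noteq> 0"
    proof -
      have "(f \<longlongrightarrow> f 0) (at 0)" using analytic_at_imp_isCont[OF fa] isCont_def by blast
      from tendsto_imp_eventually_ne[OF this f0] f0 show ?thesis
        by (simp add: eventually_nhds_conv_at)
    qed
    have small: "\<forall>\<^sub>F t in nhds 0. norm (g (- t) + g t) < 2 * pi"
    proof -
      have "isCont g 0" using analytic_at_imp_isCont[OF assms(1)] .
      moreover have "isCont (\<lambda>t. g (- t)) 0"
        using isCont_o2[where f=uminus and a=0 and g=g] \<open>isCont g 0\<close> by (simp add: continuous_intros)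
      ultimately have "isCont (\<lambda>t. g (- t) + g t) 0"
        by (intro continuous_intros)
      then have "((\<lambda>t. g (- t) + g t) \<longlongrightarrow> 0) (at 0)" unfolding isCont_def using assms(2) by simp
      then have "\<forall>\<^sub>F t in at 0. norm (g (- t) + g t) < 2 * pi"
        using tendstoD[of _ 0 _ "2*pi"] by (fastforce simp: dist_norm)
      then show ?thesis using assms(2) by (simp add: eventually_nhds_conv_at)
    qed
    show "(\<forall>\<^sub>F t in nhds 0. g (- t) = - g t) \<and>
          (\<forall>\<^sub>F t in nhds 0. f (- t) * exp (A / 2 * g (- t)) = f t * exp (A / 2 * g t))"
    proof
      show "\<forall>\<^sub>F t in nhds 0. g (- t) = - g t"
        using E[of 0] E[of 1] fne small
      proof eventually_elim
        case (elim t)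
        have e0: "f t * exp (A * g t) = f (- t)" using elim(1) by simp
        have e1: "f t * exp ((A - 1) * g t) = f (- t) * exp (g (- t))" using elim(2) by simp
        have "f t * exp (A * g t) * exp (g (- t)) = f t * exp ((A - 1) * g t)"
          using e0 e1 by simp
        also have "(A - 1) * g t = A * g t + (- g t)" by (simp add: algebra_simps)
        finally have "f t * exp (A * g t) * exp (g (- t)) = f t * exp (A * g t) * exp (- g t)"
          by (simp only: exp_add mult.assoc)
        then have "exp (g (- t)) = exp (- g t)" using elim(3) by simp
        then have "exp (g (- t) + g t) = 1" by (simp add: exp_add exp_minus)
        then obtain n :: int where "Re (g (- t) + g t) = 0" "Im (g (- t) + g t) = of_int (2*n) * pi"
          using exp_eq_1 by blast
        moreover have "\<bar>Im (g (- t) + g t)\<bar> < 2 * pi"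
          using elim(4) abs_Im_le_cmod le_less_trans by blast
        ultimately have "n = 0" by (auto simp: abs_mult)
        with \<open>Re _ = 0\<close> \<open>Im _ = _\<close> have "g (- t) + g t = 0" by (simp add: complex_eq_iff)
        then show ?case by (simp add: eq_neg_iff_add_eq_0)
      qed
      show "\<forall>\<^sub>F t in nhds 0. f (- t) * exp (A / 2 * g (- t)) = f t * exp (A / 2 * g t)"
        using E[of "A/2"] by eventually_elim (simp add: field_simps)
    qed
  next
    assume "(\<forall>\<^sub>F t in nhds 0. g (- t) = - g t) \<and>
          (\<forall>\<^sub>F t in nhds 0. f (- t) * exp (A / 2 * g (- t)) = f t * exp (A / 2 * g t))"
    then have godd: "\<forall>\<^sub>F t in nhds 0. g (- t) = - g t" and
      heven: "\<forall>\<^sub>F t in nhds 0. f (- t) * exp (A / 2 * g (- t)) = f t * exp (A / 2 * g t)" by auto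
    show "\<forall>n x. poly (P n) (A - x) = (-1) ^ n * poly (P n) x"
    proof (intro allI)
      fix n x
      have "\<forall>\<^sub>F t in nhds 0. (\<lambda>n. ((poly (P n) (A - x) - (-1) ^ n * poly (P n) x) / C n) * t ^ n) sums 0"
        using ser[of "A - x"] sern[of x] godd heven
      proof eventually_elim
        case (elim t)
        have ft: "f (- t) = f t * exp (A * g t)"
        proof -
          have "f (- t) * exp (- (A / 2 * g t)) = f t * exp (A / 2 * g t)" using elim(3,4) by simp
          then have "f (- t) = f t * exp (A / 2 * g t) * exp (A / 2 * g t)"
            by (simp add: exp_minus field_simps)
          also have "\<dots> = f t * exp (A * g t)" by (simp add: mult.assoc exp_add[symmetric])
          finally show ?thesis .
        qed
        have "f (- t) * exp (x * g (- t)) = f t * exp ((A - x) * g t)"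
          using elim(3) by (simp add: ft mult.assoc exp_add[symmetric] algebra_simps)
        with elim(2) have "(\<lambda>n. poly (P n) x * (- t) ^ n / C n) sums (f t * exp ((A - x) * g t))" by simp
        from sums_diff[OF elim(1) this]
        have "(\<lambda>n. poly (P n) (A - x) * t ^ n / C n - poly (P n) x * (- t) ^ n / C n) sums 0" by simp
        moreover have "(\<lambda>n. ((poly (P n) (A - x) - (-1) ^ n * poly (P n) x) / C n) * t ^ n)
            = (\<lambda>n. poly (P n) (A - x) * t ^ n / C n - poly (P n) x * (- t) ^ n / C n)"
        proof (rule ext)
          fix n
          have "(-t)^n = (-1)^n * t^n" by (rule power_minus)
          then show "((poly (P n) (A - x) - (-1) ^ n * poly (P n) x) / C n) * t ^ n
             = poly (P n) (A - x) * t ^ n / C n - poly (P n) x * (- t) ^ n / C n"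
            by (simp only: ) (simp add: diff_divide_distrib right_diff_distrib left_diff_distrib)
        qed
        ultimately show ?case by simp
      qed
      from powser_zero_unique[OF this, of n] Cnz[of n]
      show "poly (P n) (A - x) = (-1) ^ n * poly (P n) x" by simp
    qed
  qed
qed

end
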